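(* Consider Algorithm AUX with parameter $t_0$ on an instance satisfying the standing assumption, with an edge labeling as in the context. For every offline vertex $u$ and every $t\in[0,1]$, we have $f_u(t)=f(t)$.
   Context: **Model.** Poisson arrival model. Each online type $i$ independently arrives according to a Poisson process of rate $\lambda_i$ on $[0,1]$. On arrival, a vertex is immediately and irrevocably matched to an unmatched offline neighbor or discarded. Each offline vertex is matched at most once. The instance is a bipartite graph $(I,J,E)$ with rates $\lambda_i>0$. **Standing assumption.** There are values $x_{ij}\ge0$ (an optimal Jaillet–Lu LP solution) with $\sum_i x_{ij}=1$ for all $j$, and each type is one of two kinds: - first-class: one neighbor $j$, with $x_{ij}=\lambda_i$; - second-class: two neighbors $j_1,j_2$, with $x_{ij_1}=x_{ij_2}=\lambda_i/2$. **Labeling.** Each edge is labeled first-class or second-class. Edges of first-class types are labeled first-class. For every $j$, the first-class-labeled edges at $j$ have total $x$-value $1-\ln2$. **Reference process.** $H$ has offline vertices $a,b$; a type of rate $2\ln2$ adjacent to both; and types of rate $1-\ln2$ adjacent only to $a$, resp. only to $b$. Algorithm RES with parameter $t_0$ works as follows: - single-neighbor arrivals are matched if their neighbor is unmatched; - a two-neighbor arrival at time $t>t_0$ with an unmatched neighbor is matched to a uniformly random unmatched neighbor. On $H$ under RES, $f(t)$ is the probability that a given offline vertex is matched by time $t$, $g(t)$ the probability both are, and $\bar g=1-g$. **Algorithm AUX (parameter $t_0$).** Under AUX: - $f_u(t)$ is the probability that offline $u$ is matched by time $t$, and $\bar f_u=1-f_u$; - $g'_{u,v}(t)$ is the probability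 that both $u$ and $v$ are unmatched at time $t$. Edges are used only if their offline endpoint is unmatched. - A first-class arrival is matched to its neighbor if possible. - A second-class arrival of type $i$ with neighbors $u,v$ chooses at most one edge, with disjoint probabilities: - each first-class-labeled edge $(i,u)$ with probability $1/2$; - if the arrival time is $t>t_0$, each second-class-labeled edge $(i,u)$ with probability $\frac12\min\{\bar g(t)/(2\bar f_u(t)-g'_{u,v}(t)),1\}$ if $v$ is unmatched, or $\min\{\bar g(t)/(2\bar f_u(t)-g'_{u,v}(t)),1\}$ if $v$ is matched. *)

theory Defs
  imports "HOL-Analysis.Analysis"
begin

text \<open>Law of a time-inhomogeneous continuous-time Markov chain on a finite state
space Omega on the time interval [0,1], started in s0, with jump rates Q r s s'
(rate of jumping from s to s' at time r).  It is characterised as a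
(non-negative, continuous) solution of the Kolmogorov forward equation in
integral form.  p t s is the probability of being in state s at time t.\<close>
definition kolmogorov_sol ::
  "'s set \<Rightarrow> 's \<Rightarrow> (real \<Rightarrow> 's \<Rightarrow> 's \<Rightarrow> real) \<Rightarrow> (real \<Rightarrow> 's \<Rightarrow> real) \<Rightarrow> bool" where
  "kolmogorov_sol \<Omega> s0 Q p \<longleftrightarrow>
     (\<forall>s\<in>\<Omega>. p 0 s = (if s = s0 then 1 else 0)) \<and>
     (\<forall>s\<in>\<Omega>. continuous_on {0..1} (\<lambda>t. p t s)) \<and>
     (\<forall>t\<in>{0..1}. \<forall>s\<in>\<Omega>. 0 \<le> p t s) \<and>
     (\<forall>t\<in>{0..1}. \<forall>s\<in>\<Omega>.
        ((\<lambda>r. (\<Sum>s'\<in>\<Omega> - {s}. p r s' * Q r s' s) - (\<Sum>s'\<in>\<Omega> - {s}. p r s * Q r s s'))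
          has_integral (p t s - p 0 s)) {0..t})"

text \<open>Standing assumption on the instance: online types I with neighbourhoods N i
and Poisson rates lam i, offline vertices J, LP values x.\<close>
definition standing_instance ::
  "'i set \<Rightarrow> 'j set \<Rightarrow> ('i \<Rightarrow> 'j set) \<Rightarrow> ('i \<Rightarrow> real) \<Rightarrow> ('i \<Rightarrow> 'j \<Rightarrow> real) \<Rightarrow> bool" where
  "standing_instance I J N lam x \<longleftrightarrow>
     finite I \<and> finite J \<and>
     (\<forall>i\<in>I. N i \<subseteq> J \<and> 0 < lam i \<and> (\<forall>j\<in>N i. 0 \<le> x i j) \<and>
        ((\<exists>j. N i = {j} \<and> x i j = lam i) \<or>
         (\<exists>j1 j2. j1 \<noteq> j2 \<and> N i = {j1, j2} \<and> x i j1 = lam i / 2 \<and> x i j2 = lam i / 2))) \<and>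
     (\<forall>j\<in>J. (\<Sum>i\<in>{i\<in>I. j \<in> N i}. x i j) = 1)"

text \<open>FC is the set of edges labelled first-class.\<close>
definition valid_labeling ::
  "'i set \<Rightarrow> 'j set \<Rightarrow> ('i \<Rightarrow> 'j set) \<Rightarrow> ('i \<Rightarrow> 'j \<Rightarrow> real) \<Rightarrow> ('i \<times> 'j) set \<Rightarrow> bool" where
  "valid_labeling I J N x FC \<longleftrightarrow>
     FC \<subseteq> {(i, j). i \<in> I \<and> j \<in> N i} \<and>
     (\<forall>i\<in>I. card (N i) = 1 \<longrightarrow> (\<forall>j\<in>N i. (i, j) \<in> FC)) \<and>
     (\<forall>j\<in>J. (\<Sum>i\<in>{i\<in>I. j \<in> N i \<and> (i, j) \<in> FC}. x i j) = 1 - ln 2)"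

text \<open>Reference process H under RES.  Offline vertices of H: a = True, b = False;
a state is the set of matched offline vertices.\<close>
definition res_Q :: "real \<Rightarrow> real \<Rightarrow> bool set \<Rightarrow> bool set \<Rightarrow> real" where
  "res_Q t0 r S S' =
     (\<Sum>w\<in>UNIV - S. if S' = insert w S then
        (1 - ln 2) + (if t0 < r then 2 * ln 2 * (if Not w \<in> S then 1 else 1 / 2) else 0)
      else 0)"

definition res_f :: "(real \<Rightarrow> bool set \<Rightarrow> real) \<Rightarrow> real \<Rightarrow> real" where
  "res_f pH t = (\<Sum>S\<in>{S. True \<in> S}. pH t S)"

definition res_g :: "(real \<Rightarrow> bool set \<Rightarrow> real) \<Rightarrow> real \<Rightarrow> real" where
  "res_g pH t = pH t UNIV"

definition aux_f :: "'j set \<Rightarrow> (real \<Rightarrow> 'j set \<Rightarrow> real) \<Rightarrow> 'j \<Rightarrow> real \<Rightarrow> real" where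
  "aux_f J p u t = (\<Sum>S\<in>{S. S \<subseteq> J \<and> u \<in> S}. p t S)"

definition aux_g' :: "'j set \<Rightarrow> (real \<Rightarrow> 'j set \<Rightarrow> real) \<Rightarrow> 'j \<Rightarrow> 'j \<Rightarrow> real \<Rightarrow> real" where
  "aux_g' J p u v t = (\<Sum>S\<in>{S. S \<subseteq> J \<and> u \<notin> S \<and> v \<notin> S}. p t S)"

text \<open>Probability that an arrival of type i at time r, when the matched set is S
(with u unmatched), is matched to u under AUX.\<close>
definition aux_prob ::
  "real \<Rightarrow> 'j set \<Rightarrow> ('i \<Rightarrow> 'j set) \<Rightarrow> ('i \<times> 'j) set \<Rightarrow> (real \<Rightarrow> bool set \<Rightarrow> real)
   \<Rightarrow> (real \<Rightarrow> 'j set \<Rightarrow> real) \<Rightarrow> 'i \<Rightarrow> 'j \<Rightarrow> real \<Rightarrow> 'j set \<Rightarrow> real" where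
  "aux_prob t0 J N FC pH p i u r S =
     (if card (N i) = 1 then 1
      else (let v = the_elem (N i - {u});
                m = min ((1 - res_g pH r) / (2 * (1 - aux_f J p u r) - aux_g' J p u v r)) 1
            in if (i, u) \<in> FC then 1 / 2
               else if t0 < r then (if v \<in> S then m else m / 2) else 0))"

definition aux_Q ::
  "real \<Rightarrow> 'i set \<Rightarrow> 'j set \<Rightarrow> ('i \<Rightarrow> 'j set) \<Rightarrow> ('i \<Rightarrow> real) \<Rightarrow> ('i \<times> 'j) set
   \<Rightarrow> (real \<Rightarrow> bool set \<Rightarrow> real) \<Rightarrow> (real \<Rightarrow> 'j set \<Rightarrow> real)
   \<Rightarrow> real \<Rightarrow> 'j set \<Rightarrow> 'j set \<Rightarrow> real" where
  "aux_Q t0 I J N lam FC pH p r S S' =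
     (\<Sum>u\<in>J - S. if S' = insert u S then
        (\<Sum>i\<in>{i\<in>I. u \<in> N i}. lam i * aux_prob t0 J N FC pH p i u r S)
      else 0)"

end

theory Submission
  imports Defs
begin


lemma kol_gen:
  fixes Q :: "real \<Rightarrow> 's \<Rightarrow> 's \<Rightarrow> real" and \<phi> :: "'s \<Rightarrow> real"
  assumes K: "kolmogorov_sol \<Omega> s0 Q p" and fin: "finite \<Omega>" and t: "t \<in> {0..1}"
  shows "((\<lambda>r. \<Sum>s\<in>\<Omega>. p r s * (\<Sum>s'\<in>\<Omega>-{s}. Q r s s' * (\<phi> s' - \<phi> s)))
          has_integral (\<Sum>s\<in>\<Omega>. \<phi> s * p t s - \<phi> s * p 0 s)) {0..t}"
proof -
  from K t have hs: "\<And>s. s\<in>\<Omega> \<Longrightarrow> ((\<lambda>r. (\<Sum>s'\<in>\<Omega>-{s}. p r s' * Q r s' s) - (\<Sum>s'\<in>\<Omega>-{s}. p r s * Q r s s'))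
     has_integral (p t s - p 0 s)) {0..t}"
    unfolding kolmogorov_sol_def by blast
  have "((\<lambda>r. \<Sum>s\<in>\<Omega>. \<phi> s * ((\<Sum>s'\<in>\<Omega>-{s}. p r s' * Q r s' s) - (\<Sum>s'\<in>\<Omega>-{s}. p r s * Q r s s')))
     has_integral (\<Sum>s\<in>\<Omega>. \<phi> s * (p t s - p 0 s))) {0..t}"
    by (intro has_integral_sum fin has_integral_mult_right hs)
  moreover have sw: "(\<Sum>s\<in>\<Omega>. \<Sum>s'\<in>\<Omega>-{s}. f s s') = (\<Sum>s'\<in>\<Omega>. \<Sum>s\<in>\<Omega>-{s'}. f s s')" for f :: "'s \<Rightarrow> 's \<Rightarrow> real"
  proof -
    have "(\<Sum>s\<in>\<Omega>. \<Sum>s'\<in>\<Omega>-{s}. f s s') = (\<Sum>s\<in>\<Omega>. \<Sum>s'\<in>{s'. s'\<in>\<Omega> \<and> s \<noteq> s'}. f s s')"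
      by (intro sum.cong refl) auto
    also have "\<dots> = (\<Sum>s'\<in>\<Omega>. \<Sum>s\<in>{s. s\<in>\<Omega> \<and> s \<noteq> s'}. f s s')"
      by (rule sum.swap_restrict[OF fin fin])
    also have "\<dots> = (\<Sum>s'\<in>\<Omega>. \<Sum>s\<in>\<Omega>-{s'}. f s s')"
      by (intro sum.cong refl) auto
    finally show ?thesis .
  qed
  have "(\<Sum>s\<in>\<Omega>. \<phi> s * ((\<Sum>s'\<in>\<Omega>-{s}. p r s' * Q r s' s) - (\<Sum>s'\<in>\<Omega>-{s}. p r s * Q r s s')))
      = (\<Sum>s\<in>\<Omega>. p r s * (\<Sum>s'\<in>\<Omega>-{s}. Q r s s' * (\<phi> s' - \<phi> s)))" for r
  proof -
    have "(\<Sum>s\<in>\<Omega>. \<phi> s * ((\<Sum>s'\<in>\<Omega>-{s}. p r s' * Q r s' s) - (\<Sum>s'\<in>\<Omega>-{s}. p r s * Q r s s')))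
       = (\<Sum>s\<in>\<Omega>. \<Sum>s'\<in>\<Omega>-{s}. \<phi> s * p r s' * Q r s' s) - (\<Sum>s\<in>\<Omega>. \<Sum>s'\<in>\<Omega>-{s}. \<phi> s * p r s * Q r s s')"
      by (simp add: right_diff_distrib sum_distrib_left sum_subtractf mult.assoc)
    also have "(\<Sum>s\<in>\<Omega>. \<Sum>s'\<in>\<Omega>-{s}. \<phi> s * p r s' * Q r s' s) = (\<Sum>s'\<in>\<Omega>. \<Sum>s\<in>\<Omega>-{s'}. \<phi> s * p r s' * Q r s' s)"
      by (rule sw)
    finally show ?thesis
      by (simp add: sum_distrib_left sum_subtractf right_diff_distrib algebra_simps)
  qed
  ultimately show ?thesis
    by (simp add: right_diff_distrib sum_subtractf)
qed

lemma jump_sum: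
  fixes R :: "'j \<Rightarrow> real" and c :: "'j set \<Rightarrow> real"
  assumes fin: "finite J" and S: "S \<subseteq> J"
  shows "(\<Sum>S'\<in>Pow J - {S}. (\<Sum>w\<in>J-S. if S' = insert w S then R w else 0) * c S')
       = (\<Sum>w\<in>J-S. R w * c (insert w S))"
proof -
  have "(\<Sum>S'\<in>Pow J - {S}. (\<Sum>w\<in>J-S. if S' = insert w S then R w else 0) * c S')
      = (\<Sum>S'\<in>Pow J - {S}. \<Sum>w\<in>J-S. if S' = insert w S then R w * c S' else 0)"
    unfolding sum_distrib_right by (intro sum.cong refl) auto
  also have "\<dots> = (\<Sum>w\<in>J-S. \<Sum>S'\<in>Pow J - {S}. if S' = insert w S then R w * c S' else 0)"
    by (rule sum.swap)
  also have "\<dots> = (\<Sum>w\<in>J-S. R w * c (insert w S))"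
  proof (intro sum.cong refl)
    fix w assume w: "w \<in> J - S"
    then have "insert w S \<in> Pow J - {S}" using S by auto
    then show "(\<Sum>S'\<in>Pow J - {S}. if S' = insert w S then R w * c S' else 0) = R w * c (insert w S)"
      using fin by (simp add: sum.delta)
  qed
  finally show ?thesis .
qed

lemma kol_avoid:
  fixes J :: "'j set" and Q :: "real \<Rightarrow> 'j set \<Rightarrow> 'j set \<Rightarrow> real" and R :: "real \<Rightarrow> 'j \<Rightarrow> 'j set \<Rightarrow> real"
  assumes K: "kolmogorov_sol (Pow J) {} Q p" and fin: "finite J" and t: "t \<in> {0..1}"
    and QR: "\<And>r S S'. Q r S S' = (\<Sum>w\<in>J-S. if S' = insert w S then R r w S else 0)"
    and V: "V \<subseteq> J"
  shows "((\<lambda>r. - (\<Sum>S\<in>{S. S \<subseteq> J \<and> S \<inter> V = {}}. p r S * (\<Sum>w\<in>V. R r w S)))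
          has_integral ((\<Sum>S\<in>{S. S \<subseteq> J \<and> S \<inter> V = {}}. p t S) - 1)) {0..t}"
proof -
  define \<phi> :: "'j set \<Rightarrow> real" where "\<phi> S = (if S \<inter> V = {} then 1 else 0)" for S
  have finP: "finite (Pow J)" using fin by simp
  note G = kol_gen[OF K finP t, of \<phi>]
  have p0: "p 0 S = (if S = {} then 1 else 0)" if "S \<in> Pow J" for S
    using K that unfolding kolmogorov_sol_def by blast
  have val: "(\<Sum>s\<in>Pow J. \<phi> s * p t s - \<phi> s * p 0 s) = (\<Sum>S\<in>{S. S \<subseteq> J \<and> S \<inter> V = {}}. p t S) - 1"
  proof -
    have "(\<Sum>s\<in>Pow J. \<phi> s * p t s - \<phi> s * p 0 s) = (\<Sum>s\<in>Pow J. \<phi> s * p t s) - (\<Sum>s\<in>Pow J. \<phi> s * p 0 s)"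
      by (simp add: sum_subtractf)
    also have "(\<Sum>s\<in>Pow J. \<phi> s * p 0 s) = (\<Sum>s\<in>Pow J. if s = {} then 1 else 0)"
      by (intro sum.cong refl) (simp add: p0 \<phi>_def)
    also have "\<dots> = 1" using finP by (simp add: sum.delta)
    also have "(\<Sum>s\<in>Pow J. \<phi> s * p t s) = (\<Sum>s\<in>Pow J. if s \<inter> V = {} then p t s else 0)"
      by (intro sum.cong refl) (simp add: \<phi>_def)
    also have "\<dots> = (\<Sum>S\<in>{S\<in>Pow J. S \<inter> V = {}}. p t S)"
      by (simp only: sum.inter_filter[OF finP])
    also have "{S\<in>Pow J. S \<inter> V = {}} = {S. S \<subseteq> J \<and> S \<inter> V = {}}" by auto
    finally show ?thesis .
  qed
  have integrand: "(\<Sum>s\<in>Pow J. p r s * (\<Sum>s'\<in>Pow J-{s}. Q r s s' * (\<phi> s' - \<phi> s)))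
      = - (\<Sum>S\<in>{S. S \<subseteq> J \<and> S \<inter> V = {}}. p r S * (\<Sum>w\<in>V. R r w S))" for r
  proof -
    have inner: "(\<Sum>s'\<in>Pow J-{s}. Q r s s' * (\<phi> s' - \<phi> s))
        = (if s \<inter> V = {} then - (\<Sum>w\<in>V. R r w s) else 0)" if s: "s \<in> Pow J" for s
    proof -
      have "(\<Sum>s'\<in>Pow J-{s}. Q r s s' * (\<phi> s' - \<phi> s))
          = (\<Sum>w\<in>J-s. R r w s * (\<phi> (insert w s) - \<phi> s))"
        unfolding QR using jump_sum[OF fin, of s "\<lambda>w. R r w s" "\<lambda>s'. \<phi> s' - \<phi> s"] s by simp
      also have "\<dots> = (if s \<inter> V = {} then - (\<Sum>w\<in>V. R r w s) else 0)"
      proof (cases "s \<inter> V = {}")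
        case True
        have "(\<Sum>w\<in>J-s. R r w s * (\<phi> (insert w s) - \<phi> s)) = (\<Sum>w\<in>J-s. if w \<in> V then - R r w s else 0)"
          by (intro sum.cong refl) (use True in \<open>auto simp: \<phi>_def\<close>)
        also have "\<dots> = (\<Sum>w\<in>{w\<in>J-s. w \<in> V}. - R r w s)"
          using fin by (simp only: sum.inter_filter[symmetric] finite_Diff)
        also have "{w\<in>J-s. w \<in> V} = V" using V True by auto
        finally show ?thesis using True by (simp add: sum_negf)
      next
        case False
        then show ?thesis by (auto simp: \<phi>_def intro!: sum.neutral)
      qed
      finally show ?thesis .
    qed
    have "(\<Sum>s\<in>Pow J. p r s * (\<Sum>s'\<in>Pow J-{s}. Q r s s' * (\<phi> s' - \<phi> s)))
        = (\<Sum>s\<in>Pow J. if s \<inter> V = {} then - (p r s * (\<Sum>w\<in>V. R r w s)) else 0)"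
      by (intro sum.cong refl) (simp add: inner)
    also have "\<dots> = (\<Sum>S\<in>{S\<in>Pow J. S \<inter> V = {}}. - (p r S * (\<Sum>w\<in>V. R r w S)))"
      by (simp only: sum.inter_filter[OF finP])
    also have "{S\<in>Pow J. S \<inter> V = {}} = {S. S \<subseteq> J \<and> S \<inter> V = {}}" by auto
    finally show ?thesis by (simp add: sum_negf)
  qed
  show ?thesis using G unfolding val integrand .
qed

lemma int_upper:
  fixes \<beta> e :: "real \<Rightarrow> real"
  assumes "(\<beta> has_integral I) {a..b}" "continuous_on {a..b} e" "\<And>r. r \<in> {a..b} \<Longrightarrow> \<beta> r \<le> e r"
  shows "I \<le> integral {a..b} e"
  using has_integral_le[OF assms(1) integrable_integral[OF integrable_continuous_interval[OF assms(2)]]] assms(3)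
  by blast

lemma int_abs_bound:
  fixes \<beta> e :: "real \<Rightarrow> real"
  assumes b: "(\<beta> has_integral I) {a..b}" and c: "continuous_on {a..b} e" and le: "\<And>r. r \<in> {a..b} \<Longrightarrow> \<bar>\<beta> r\<bar> \<le> e r"
  shows "\<bar>I\<bar> \<le> integral {a..b} e"
proof -
  have "I \<le> integral {a..b} e" using int_upper[OF b c] le by force
  moreover have "- I \<le> integral {a..b} e"
    using int_upper[OF has_integral_neg[OF b] c] le by force
  ultimately show ?thesis by linarith
qed

lemma gronwall0:
  fixes e :: "real \<Rightarrow> real"
  assumes cont: "continuous_on {0..1} e" and nn: "\<And>t. t \<in> {0..1} \<Longrightarrow> 0 \<le> e t" and K: "0 \<le> K"
    and le: "\<And>t. t \<in> {0..1} \<Longrightarrow> e t \<le> K * integral {0..t} e"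
    and t: "t \<in> {0..1}"
  shows "e t = 0"
proof -
  define E where "E s = integral {0..s} e" for s
  define W where "W s = E s * exp (- K * s)" for s
  have E0: "E 0 = 0" by (simp add: E_def)
  have "E t \<le> 0"
  proof (cases "t = 0")
    case True then show ?thesis by (simp add: E0)
  next
    case False
    with t have t0: "0 < t" by auto
    have ct: "continuous_on {0..t} e" using t by (intro continuous_on_subset[OF cont]) auto
    have dW: "(W has_real_derivative (e x - K * E x) * exp (- K * x)) (at x within {0..t})"
      if x: "x \<in> {0..t}" for x
    proof -
      have dE: "(E has_real_derivative e x) (at x within {0..t})"
        unfolding E_def by (rule integral_has_real_derivative[OF ct x])
      have dX: "((\<lambda>s. exp (- K * s)) has_real_derivative (exp (- K * x) * (- K))) (at x within {0..t})"
        by (auto intro!: derivative_eq_intros)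
      have "((\<lambda>s. E s * exp (- K * s)) has_real_derivative (e x * exp (- K * x) + (exp (- K * x) * (- K)) * E x))
            (at x within {0..t})"
        by (rule DERIV_mult[OF dE dX])
      then show ?thesis unfolding W_def by (simp add: algebra_simps)
    qed
    have "\<exists>x\<in>{0<..<t}. W t - W 0 = (\<lambda>h. ((e x - K * E x) * exp (- K * x)) * h) (t - 0)"
      by (rule mvt_simple[OF t0]) (rule has_field_derivative_imp_has_derivative[OF dW], simp)
    then obtain \<xi> where \<xi>: "\<xi> \<in> {0<..<t}" "W t - W 0 = (\<lambda>h. ((e \<xi> - K * E \<xi>) * exp (- K * \<xi>)) * h) (t - 0)"
      by blast
    have "e \<xi> - K * E \<xi> \<le> 0" using le[of \<xi>] \<xi>(1) t by (auto simp: E_def)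
    then have "(e \<xi> - K * E \<xi>) * exp (- K * \<xi>) * t \<le> 0"
      using t0 by (simp add: mult_nonpos_nonneg)
    then have "W t \<le> 0" using \<xi>(2) by (simp add: W_def E0)
    then show ?thesis by (simp add: W_def mult_le_0_iff)
  qed
  then have "e t \<le> 0" using le[OF t] K unfolding E_def by (smt (verit) mult_nonneg_nonpos)
  with nn[OF t] show ?thesis by simp
qed

lemma barrier:
  fixes h \<beta> e :: "real \<Rightarrow> real"
  assumes t: "0 \<le> t" and hc: "continuous_on {0..t} h"
    and hi: "\<And>s. s \<in> {0..t} \<Longrightarrow> (\<beta> has_integral h s) {0..s}"
    and bd: "\<And>r. r \<in> {0..t} \<Longrightarrow> 0 \<le> h r \<Longrightarrow> \<beta> r \<le> e r"
    and ec: "continuous_on {0..t} e" and en: "\<And>r. r \<in> {0..t} \<Longrightarrow> 0 \<le> e r"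
  shows "h t \<le> integral {0..t} e"
proof -
  have eint: "e integrable_on {0..t}" by (rule integrable_continuous_interval[OF ec])
  have inn: "0 \<le> integral {c..t} e" if "0 \<le> c" "c \<le> t" for c
    using that by (intro Henstock_Kurzweil_Integration.integral_nonneg integrable_subinterval_real[OF eint]) (auto intro: en)
  have h0: "h 0 = 0"
  proof -
    have "(\<beta> has_integral h 0) {0..0}" using hi[of 0] t by simp
    moreover have "(\<beta> has_integral 0) {0..(0::real)}" by auto
    ultimately show ?thesis by (rule has_integral_unique)
  qed
  show ?thesis
  proof (cases "h t \<le> 0")
    case True then show ?thesis using inn[of 0] t by linarith
  next
    case False
    define Z where "Z = {0..t} \<inter> h -` {..0}"
    have "closed Z" unfolding Z_def by (rule continuous_closed_preimage[OF hc]) auto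
    moreover have "bounded Z" unfolding Z_def by (rule bounded_subset[of "{0..t}"]) auto
    ultimately have cZ: "compact Z" by (simp add: compact_eq_bounded_closed)
    have "0 \<in> Z" unfolding Z_def using t h0 by auto
    then obtain t1 where t1: "t1 \<in> Z" and t1max: "\<And>y. y \<in> Z \<Longrightarrow> y \<le> t1"
      using compact_attains_sup[OF cZ] by blast
    have t1r: "0 \<le> t1" "t1 \<le> t" "h t1 \<le> 0" using t1 unfolding Z_def by auto
    have "t1 \<noteq> t" using False t1r by auto
    obtain z where z: "t1 \<le> z" "z \<le> t" "h z = 0"
      using IVT'[of h t1 0 t] t1r False continuous_on_subset[OF hc, of "{t1..t}"] by force
    then have "z \<in> Z" unfolding Z_def using t1r by auto
    then have "z = t1" using t1max z by force
    then have ht1: "h t1 = 0" using z by simp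
    have pos: "0 \<le> h r" if "r \<in> {t1..t}" for r
    proof (rule ccontr)
      assume "\<not> 0 \<le> h r"
      then have "r \<in> Z" unfolding Z_def using that t1r by auto
      then have "r \<le> t1" by (rule t1max)
      then have "r = t1" using that by auto
      then show False using ht1 \<open>\<not> 0 \<le> h r\<close> by simp
    qed
    have bint: "\<beta> integrable_on {0..t}" using hi[of t] t by auto
    have "integral {0..t1} \<beta> + integral {t1..t} \<beta> = integral {0..t} \<beta>"
      by (rule Henstock_Kurzweil_Integration.integral_combine[OF t1r(1,2) bint])
    moreover have "integral {0..t1} \<beta> = h t1" using hi[of t1] t1r by (auto intro: integral_unique)
    moreover have "integral {0..t} \<beta> = h t" using hi[of t] t by (auto intro: integral_unique)
    ultimately have "h t = integral {t1..t} \<beta>" using ht1 by simp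
    also have "\<dots> \<le> integral {t1..t} e"
      using int_upper[OF integrable_integral[OF integrable_subinterval_real[OF bint]], of t1 t e]
        continuous_on_subset[OF ec, of "{t1..t}"] bd pos t1r by auto
    also have "\<dots> \<le> integral {0..t1} e + integral {t1..t} e" using inn[of 0] t1r
      using Henstock_Kurzweil_Integration.integral_nonneg[OF integrable_subinterval_real[OF eint], of 0 t1] en by auto
    also have "\<dots> = integral {0..t} e" by (rule Henstock_Kurzweil_Integration.integral_combine[OF t1r(1,2) eint])
    finally show ?thesis .
  qed
qed



lemma sc1:
  fixes gb D :: real
  assumes "0 \<le> gb" "0 \<le> D"
  shows "\<bar>gb / 2 - min (gb / D) 1 * (D / 2)\<bar> \<le> max (gb - D) 0 / 2"
proof (cases "D = 0")
  case True then show ?thesis using assms by simp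
next
  case False
  then have D: "0 < D" using assms by simp
  show ?thesis
  proof (cases "gb / D \<le> 1")
    case True
    then have "gb \<le> D" using D by (simp add: divide_le_eq)
    moreover have "min (gb / D) 1 * (D / 2) = gb / 2" using True D by simp
    ultimately show ?thesis by simp
  next
    case False
    then have "D < gb" using D by (simp add: le_divide_eq)
    moreover have "min (gb / D) 1 = 1" using False by simp
    ultimately show ?thesis by simp
  qed
qed

lemma sc2:
  fixes T g g2 G F Fu \<delta> \<eta> :: real
  assumes T0: "0 \<le> T" and Tg: "T \<le> g" and Tg2: "T \<le> g2" and Gg: "G \<le> g" and G0: "0 \<le> G"
    and GF: "G \<le> F" and g2Fu: "g2 \<le> Fu" and gFu: "g \<le> Fu"
    and \<delta>: "\<bar>Fu - F\<bar> \<le> \<delta>" and \<eta>: "g2 - G \<le> \<eta>" "0 \<le> \<eta>"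
  shows "G / 2 - min ((2 * F - G) / (2 * Fu - g2)) 1 * (g - T / 2) \<le> 2 * (\<delta> + \<eta>)"
proof -
  define D where "D = 2 * Fu - g2"
  define gb where "gb = 2 * F - G"
  have D0: "Fu \<le> D" unfolding D_def using g2Fu by simp
  have gb0: "F \<le> gb" unfolding gb_def using GF by simp
  have Y: "g / 2 \<le> g - T / 2" using Tg by simp
  have d0: "0 \<le> \<delta>" using \<delta> by simp
  have Fu0: "0 \<le> Fu" using G0 Gg gFu by simp
  have m0: "0 \<le> min (gb / D) 1" using D0 Fu0 gb0 GF G0 by simp
  have Y0: "0 \<le> g - T / 2" using Tg T0 by simp
  have mm: "min ((2 * F - G) / (2 * Fu - g2)) 1 = min (gb / D) 1" unfolding D_def gb_def ..
  have main: "G / 2 - min (gb / D) 1 * (g - T / 2) \<le> 2 * (\<delta> + \<eta>)"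
  proof (cases "gb / D \<le> 1")
    case False
    then have "min (gb / D) 1 = 1" by simp
    then show ?thesis using Y Gg d0 \<eta> by simp
  next
    case True
    then have m: "min (gb / D) 1 = gb / D" by simp
    show ?thesis
    proof (cases "D = 0")
      case True
      then have "Fu = 0" using D0 Fu0 by simp
      then have "g = 0" "G = 0" "T = 0" using Gg gFu G0 T0 Tg by auto
      then show ?thesis using d0 \<eta> by simp
    next
      case False
      then have Dp: "0 < D" using D0 Fu0 by simp
      have "gb * (2 * g - T) \<ge> gb * (2 * G - T)" using Gg gb0 GF G0
        by (intro mult_left_mono) auto
      have N: "G * D - gb * (2 * g - T) \<le> 2 * G * (Fu - F) + 2 * (F - G) * (g2 - G)"
      proof -
        have "gb * (2 * g - T) \<ge> gb * (2 * G - T)" using Gg gb0 GF G0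
          by (intro mult_left_mono) auto
        moreover have "gb * T \<le> gb * g2" using Tg2 gb0 GF G0 by (intro mult_left_mono) auto
        ultimately have "G * D - gb * (2 * g - T) \<le> G * D - gb * (2 * G - T) + (gb * g2 - gb * T)"
          by linarith
        also have "\<dots> = 2 * G * (Fu - F) + 2 * (F - G) * (g2 - G)"
          unfolding D_def gb_def by (simp add: algebra_simps)
        finally show ?thesis .
      qed
      have N2: "2 * G * (Fu - F) + 2 * (F - G) * (g2 - G) \<le> 2 * (D + \<delta>) * (\<delta> + \<eta>)"
      proof -
        have a: "G * (Fu - F) \<le> (D + \<delta>) * \<delta>"
        proof -
          have "G * (Fu - F) \<le> G * \<delta>" using \<delta> G0 by (intro mult_left_mono) auto
          also have "\<dots> \<le> (D + \<delta>) * \<delta>" using GF \<delta> D0 d0 by (intro mult_right_mono) auto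
          finally show ?thesis .
        qed
        have b: "(F - G) * (g2 - G) \<le> (D + \<delta>) * \<eta>"
        proof -
          have "(F - G) * (g2 - G) \<le> (F - G) * \<eta>" using GF \<eta> by (intro mult_left_mono) auto
          also have "\<dots> \<le> (D + \<delta>) * \<eta>" using GF \<delta> D0 G0 \<eta> by (intro mult_right_mono) auto
          finally show ?thesis .
        qed
        have c: "0 \<le> (D + \<delta>) * \<delta>" "0 \<le> (D + \<delta>) * \<eta>" using Dp d0 \<eta> by auto
        have e1: "2 * G * (Fu - F) + 2 * (F - G) * (g2 - G) = 2 * (G * (Fu - F) + (F - G) * (g2 - G))"
          by (simp add: algebra_simps)
        have e2: "2 * (D + \<delta>) * (\<delta> + \<eta>) = 2 * ((D + \<delta>) * \<delta> + (D + \<delta>) * \<eta>)"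
          by (simp add: algebra_simps)
        show ?thesis unfolding e1 e2 by (rule mult_left_mono[OF add_mono[OF a b]]) simp
      qed
      have eq: "G / 2 - gb / D * (g - T / 2) = (G * D - gb * (2 * g - T)) / (2 * D)"
      proof -
        have "(G * D - gb * (2 * g - T)) / (2 * D) = G * D / (2 * D) - gb * (2 * g - T) / (2 * D)"
          by (rule diff_divide_distrib)
        also have "G * D / (2 * D) = G / 2" using Dp by simp
        also have "gb * (2 * g - T) / (2 * D) = gb / D * (g - T / 2)" using Dp
          by (simp add: divide_simps)
        finally show ?thesis by simp
      qed
      show ?thesis
      proof (cases "\<delta> \<le> D")
        case True
        have "(G * D - gb * (2 * g - T)) / (2 * D) \<le> (2 * (D + \<delta>) * (\<delta> + \<eta>)) / (2 * D)"
          using N N2 Dp by (intro divide_right_mono) auto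
        also have "\<dots> = (\<delta> + \<eta>) + \<delta> * (\<delta> + \<eta>) / D" using Dp by (simp add: field_simps)
        also have "\<delta> * (\<delta> + \<eta>) / D \<le> D * (\<delta> + \<eta>) / D"
          using True d0 \<eta> Dp by (intro divide_right_mono mult_right_mono) auto
        also have "D * (\<delta> + \<eta>) / D = \<delta> + \<eta>" using Dp by simp
        finally show ?thesis using m eq by simp
      next
        case False
        have "G \<le> D + \<delta>" using GF \<delta> D0 by simp
        moreover have "0 \<le> gb / D * (g - T / 2)" using m m0 Y0 by (metis mult_nonneg_nonneg)
        ultimately show ?thesis using m False \<eta> d0 by simp
      qed
    qed
  qed
  show ?thesis using main mm by simp
qed



definition SC :: "'i set \<Rightarrow> ('i \<Rightarrow> 'j set) \<Rightarrow> ('i \<times> 'j) set \<Rightarrow> 'j \<Rightarrow> 'i set" where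
  "SC I N FC u = {i\<in>I. u \<in> N i \<and> card (N i) \<noteq> 1 \<and> (i, u) \<notin> FC}"

definition oth :: "('i \<Rightarrow> 'j set) \<Rightarrow> 'i \<Rightarrow> 'j \<Rightarrow> 'j" where
  "oth N i u = the_elem (N i - {u})"

definition mm :: "'j set \<Rightarrow> ('i \<Rightarrow> 'j set) \<Rightarrow> (real \<Rightarrow> bool set \<Rightarrow> real) \<Rightarrow> (real \<Rightarrow> 'j set \<Rightarrow> real)
   \<Rightarrow> 'i \<Rightarrow> 'j \<Rightarrow> real \<Rightarrow> real" where
  "mm J N pH p i u r = min ((1 - res_g pH r) / (2 * (1 - aux_f J p u r) - aux_g' J p u (oth N i u) r)) 1"

lemma sum_split:
  fixes f :: "'a \<Rightarrow> real"
  assumes "finite A"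
  shows "sum f A = sum f {x\<in>A. P x} + sum f {x\<in>A. \<not> P x}"
proof -
  have "A = {x\<in>A. P x} \<union> {x\<in>A. \<not> P x}" by auto
  then have "sum f A = sum f ({x\<in>A. P x} \<union> {x\<in>A. \<not> P x})" by simp
  also have "\<dots> = sum f {x\<in>A. P x} + sum f {x\<in>A. \<not> P x}"
    by (rule sum.union_disjoint) (use assms in auto)
  finally show ?thesis .
qed

lemma inst2:
  assumes st: "standing_instance I J N lam x" and i: "i \<in> I" and u: "u \<in> N i" and c: "card (N i) \<noteq> 1"
  shows "x i u = lam i / 2" "oth N i u \<noteq> u" "N i = {u, oth N i u}" "oth N i u \<in> J"
proof -
  from st i have NJ: "N i \<subseteq> J" and
    cases: "(\<exists>j. N i = {j} \<and> x i j = lam i) \<or>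
         (\<exists>j1 j2. j1 \<noteq> j2 \<and> N i = {j1, j2} \<and> x i j1 = lam i / 2 \<and> x i j2 = lam i / 2)"
    unfolding standing_instance_def by blast+
  from cases c obtain j1 j2 where j: "j1 \<noteq> j2" "N i = {j1, j2}" "x i j1 = lam i / 2" "x i j2 = lam i / 2"
    by auto
  show "x i u = lam i / 2" using j u by auto
  have "N i - {u} = {if u = j1 then j2 else j1}" using j u by auto
  then have o: "oth N i u = (if u = j1 then j2 else j1)" unfolding oth_def by simp
  show "oth N i u \<noteq> u" using o j u by auto
  show "N i = {u, oth N i u}" using o j u by auto
  show "oth N i u \<in> J" using o j NJ by auto
qed

lemma inst1:
  assumes st: "standing_instance I J N lam x" and i: "i \<in> I" and u: "u \<in> N i" and c: "card (N i) = 1"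
  shows "x i u = lam i"
proof -
  from st i have
    cases: "(\<exists>j. N i = {j} \<and> x i j = lam i) \<or>
         (\<exists>j1 j2. j1 \<noteq> j2 \<and> N i = {j1, j2} \<and> x i j1 = lam i / 2 \<and> x i j2 = lam i / 2)"
    unfolding standing_instance_def by blast+
  from cases c obtain j where "N i = {j}" "x i j = lam i" by auto
  then show ?thesis using u by auto
qed

lemma rate_parts:
  assumes st: "standing_instance I J N lam x" and vl: "valid_labeling I J N x FC" and u: "u \<in> J"
  shows "(\<Sum>i\<in>{i\<in>I. u \<in> N i \<and> \<not> (i \<in> SC I N FC u)}. x i u) = 1 - ln 2"
    and "(\<Sum>i\<in>SC I N FC u. lam i) = 2 * ln 2"
    and "\<And>i. i \<in> {i\<in>I. u \<in> N i \<and> \<not> (i \<in> SC I N FC u)} \<Longrightarrow> lam i * aux_prob t0 J N FC pH p i u r S = x i u"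
    and "\<And>i. i \<in> SC I N FC u \<Longrightarrow> aux_prob t0 J N FC pH p i u r S =
            (if t0 < r then (if oth N i u \<in> S then mm J N pH p i u r else mm J N pH p i u r / 2) else 0)"
proof -
  have finI: "finite I" using st unfolding standing_instance_def by blast
  have B: "{i\<in>I. u \<in> N i \<and> \<not> (i \<in> SC I N FC u)} = {i\<in>I. u \<in> N i \<and> (i, u) \<in> FC}"
    using vl unfolding SC_def valid_labeling_def by auto
  show B1: "(\<Sum>i\<in>{i\<in>I. u \<in> N i \<and> \<not> (i \<in> SC I N FC u)}. x i u) = 1 - ln 2"
    unfolding B using vl u unfolding valid_labeling_def by blast
  have tot: "(\<Sum>i\<in>{i\<in>I. u \<in> N i}. x i u) = 1" using st u unfolding standing_instance_def by blast
  have "(\<Sum>i\<in>{i\<in>I. u \<in> N i}. x i u) = (\<Sum>i\<in>{i\<in>{i\<in>I. u \<in> N i}. i \<in> SC I N FC u}. x i u) + (\<Sum>i\<in>{i\<in>{i\<in>I. u \<in> N i}. i \<notin> SC I N FC u}. x i u)"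
    by (rule sum_split) (use finI in auto)
  also have "{i\<in>{i\<in>I. u \<in> N i}. i \<in> SC I N FC u} = SC I N FC u" unfolding SC_def by auto
  also have "{i\<in>{i\<in>I. u \<in> N i}. i \<notin> SC I N FC u} = {i\<in>I. u \<in> N i \<and> \<not> (i \<in> SC I N FC u)}" by auto
  finally have "(\<Sum>i\<in>SC I N FC u. x i u) = ln 2" using tot B1 by simp
  moreover have "(\<Sum>i\<in>SC I N FC u. x i u) = (\<Sum>i\<in>SC I N FC u. lam i / 2)"
  proof (intro sum.cong refl)
    fix i assume "i \<in> SC I N FC u"
    then show "x i u = lam i / 2" using inst2(1)[OF st] unfolding SC_def by blast
  qed
  ultimately show "(\<Sum>i\<in>SC I N FC u. lam i) = 2 * ln 2"
    by (simp add: sum_divide_distrib[symmetric])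
  show "lam i * aux_prob t0 J N FC pH p i u r S = x i u" if i: "i \<in> {i\<in>I. u \<in> N i \<and> \<not> (i \<in> SC I N FC u)}" for i
  proof (cases "card (N i) = 1")
    case True
    then show ?thesis using i inst1[OF st] by (simp add: aux_prob_def)
  next
    case False
    then have "(i, u) \<in> FC" using i unfolding SC_def by auto
    then show ?thesis using i False inst2[OF st] by (simp add: aux_prob_def)
  qed
  show "aux_prob t0 J N FC pH p i u r S =
            (if t0 < r then (if oth N i u \<in> S then mm J N pH p i u r else mm J N pH p i u r / 2) else 0)"
    if i: "i \<in> SC I N FC u" for i
    using i unfolding SC_def aux_prob_def mm_def oth_def Let_def by auto
qed

lemma rate_decomp:
  assumes st: "standing_instance I J N lam x" and vl: "valid_labeling I J N x FC" and u: "u \<in> J"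
  shows "(\<Sum>i\<in>{i\<in>I. u \<in> N i}. lam i * aux_prob t0 J N FC pH p i u r S)
      = (1 - ln 2) + (if t0 < r then (\<Sum>i\<in>SC I N FC u. lam i *
            (if oth N i u \<in> S then mm J N pH p i u r else mm J N pH p i u r / 2)) else 0)"
proof -
  have finI: "finite I" using st unfolding standing_instance_def by blast
  let ?f = "\<lambda>i. lam i * aux_prob t0 J N FC pH p i u r S"
  have "(\<Sum>i\<in>{i\<in>I. u \<in> N i}. ?f i) = (\<Sum>i\<in>{i\<in>{i\<in>I. u \<in> N i}. i \<in> SC I N FC u}. ?f i) + (\<Sum>i\<in>{i\<in>{i\<in>I. u \<in> N i}. i \<notin> SC I N FC u}. ?f i)"
    by (rule sum_split) (use finI in auto)
  also have "{i\<in>{i\<in>I. u \<in> N i}. i \<in> SC I N FC u} = SC I N FC u" unfolding SC_def by auto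
  also have "{i\<in>{i\<in>I. u \<in> N i}. i \<notin> SC I N FC u} = {i\<in>I. u \<in> N i \<and> \<not> (i \<in> SC I N FC u)}" by auto
  also have "(\<Sum>i\<in>{i\<in>I. u \<in> N i \<and> \<not> (i \<in> SC I N FC u)}. ?f i) = (\<Sum>i\<in>{i\<in>I. u \<in> N i \<and> \<not> (i \<in> SC I N FC u)}. x i u)"
    by (intro sum.cong refl) (rule rate_parts(3)[OF st vl u])
  also have "\<dots> = 1 - ln 2" by (rule rate_parts(1)[OF st vl u])
  also have "(\<Sum>i\<in>SC I N FC u. ?f i) = (\<Sum>i\<in>SC I N FC u. if t0 < r then lam i *
            (if oth N i u \<in> S then mm J N pH p i u r else mm J N pH p i u r / 2) else 0)"
    by (intro sum.cong refl) (simp add: rate_parts(4)[OF st vl u])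
  also have "\<dots> = (if t0 < r then (\<Sum>i\<in>SC I N FC u. lam i *
            (if oth N i u \<in> S then mm J N pH p i u r else mm J N pH p i u r / 2)) else 0)"
    by simp
  finally show ?thesis by simp
qed

lemma weighted:
  assumes st: "standing_instance I J N lam x" and vl: "valid_labeling I J N x FC" and u: "u \<in> J"
  shows "(\<Sum>S\<in>{S. S \<subseteq> J \<and> Q S}. p r S * (\<Sum>i\<in>{i\<in>I. u \<in> N i}. lam i * aux_prob t0 J N FC pH p i u r S))
    = (1 - ln 2) * (\<Sum>S\<in>{S. S \<subseteq> J \<and> Q S}. p r S)
      + (if t0 < r then (\<Sum>i\<in>SC I N FC u. lam i * mm J N pH p i u r *
          ((\<Sum>S\<in>{S. S \<subseteq> J \<and> Q S}. p r S) - (\<Sum>S\<in>{S. S \<subseteq> J \<and> Q S \<and> oth N i u \<notin> S}. p r S) / 2)) else 0)"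
proof -
  have finJ: "finite J" using st unfolding standing_instance_def by blast
  let ?X = "{S. S \<subseteq> J \<and> Q S}"
  have finX: "finite ?X" by (rule finite_subset[of _ "Pow J"]) (use finJ in auto)
  let ?c = "\<lambda>i S. if oth N i u \<in> S then mm J N pH p i u r else mm J N pH p i u r / 2"
  have "(\<Sum>S\<in>?X. p r S * (\<Sum>i\<in>{i\<in>I. u \<in> N i}. lam i * aux_prob t0 J N FC pH p i u r S))
      = (\<Sum>S\<in>?X. p r S * ((1 - ln 2) + (if t0 < r then (\<Sum>i\<in>SC I N FC u. lam i * ?c i S) else 0)))"
    by (intro sum.cong refl) (simp add: rate_decomp[OF st vl u])
  also have "\<dots> = (1 - ln 2) * (\<Sum>S\<in>?X. p r S) + (if t0 < r then (\<Sum>S\<in>?X. p r S * (\<Sum>i\<in>SC I N FC u. lam i * ?c i S)) else 0)"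
    by (simp add: distrib_left sum.distrib sum_distrib_left mult.commute)
  also have "(\<Sum>S\<in>?X. p r S * (\<Sum>i\<in>SC I N FC u. lam i * ?c i S)) = (\<Sum>i\<in>SC I N FC u. lam i * (\<Sum>S\<in>?X. p r S * ?c i S))"
    by (simp add: sum_distrib_left sum.swap[of _ ?X] mult.left_commute)
  also have "\<dots> = (\<Sum>i\<in>SC I N FC u. lam i * mm J N pH p i u r *
          ((\<Sum>S\<in>?X. p r S) - (\<Sum>S\<in>{S. S \<subseteq> J \<and> Q S \<and> oth N i u \<notin> S}. p r S) / 2))"
  proof (intro sum.cong refl)
    fix i
    let ?m = "mm J N pH p i u r" and ?v = "oth N i u"
    have "(\<Sum>S\<in>?X. p r S * ?c i S) = (\<Sum>S\<in>?X. ?m * p r S - ?m / 2 * (if ?v \<notin> S then p r S else 0))"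
      by (intro sum.cong refl) auto
    also have "\<dots> = ?m * (\<Sum>S\<in>?X. p r S) - ?m / 2 * (\<Sum>S\<in>?X. if ?v \<notin> S then p r S else 0)"
      by (simp add: sum_subtractf sum_distrib_left)
    also have "(\<Sum>S\<in>?X. if ?v \<notin> S then p r S else 0) = (\<Sum>S\<in>{S\<in>?X. ?v \<notin> S}. p r S)"
      by (simp only: sum.inter_filter[OF finX])
    also have "{S\<in>?X. ?v \<notin> S} = {S. S \<subseteq> J \<and> Q S \<and> ?v \<notin> S}" by auto
    finally have eqA: "(\<Sum>S\<in>?X. p r S * ?c i S) = ?m * (\<Sum>S\<in>?X. p r S) - ?m / 2 * (\<Sum>S\<in>{S. S \<subseteq> J \<and> Q S \<and> ?v \<notin> S}. p r S)" .
    show "lam i * (\<Sum>S\<in>?X. p r S * ?c i S) = lam i * ?m * ((\<Sum>S\<in>?X. p r S) - (\<Sum>S\<in>{S. S \<subseteq> J \<and> Q S \<and> ?v \<notin> S}. p r S) / 2)"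
      unfolding eqA by (simp add: algebra_simps)
  qed
  finally show ?thesis .
qed



lemma bool_set_cases: "S = {} \<or> S = {True} \<or> S = {False} \<or> S = (UNIV :: bool set)"
proof -
  have "S \<in> Pow {False, True}" by (metis UNIV_bool subset_UNIV Pow_iff)
  then show ?thesis unfolding Pow_insert by auto
qed

lemma bool_neqs: "{True} \<noteq> {False}" "{} \<noteq> {True}" "{} \<noteq> {False}" "{True} \<noteq> (UNIV :: bool set)"
    "{False} \<noteq> (UNIV :: bool set)" "{} \<noteq> (UNIV :: bool set)"
  by (auto simp: set_eq_iff)

lemma avoidT: "{S::bool set. S \<subseteq> UNIV \<and> S \<inter> {True} = {}} = {{}, {False}}"
proof (rule set_eqI)
  fix S :: "bool set"
  from bool_set_cases[of S] show "S \<in> {S::bool set. S \<subseteq> UNIV \<and> S \<inter> {True} = {}} \<longleftrightarrow> S \<in> {{}, {False}}"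
    using bool_neqs by (elim disjE) auto
qed
lemma avoidF: "{S::bool set. S \<subseteq> UNIV \<and> S \<inter> {False} = {}} = {{}, {True}}"
proof (rule set_eqI)
  fix S :: "bool set"
  from bool_set_cases[of S] show "S \<in> {S::bool set. S \<subseteq> UNIV \<and> S \<inter> {False} = {}} \<longleftrightarrow> S \<in> {{}, {True}}"
    using bool_neqs by (elim disjE) auto
qed
lemma avoidU: "{S::bool set. S \<subseteq> UNIV \<and> S \<inter> UNIV = {}} = {{}}"
  by auto
lemma avoidE: "{S::bool set. S \<subseteq> UNIV \<and> S \<inter> {} = {}} = {{}, {True}, {False}, UNIV}"
proof (rule set_eqI)
  fix S :: "bool set"
  from bool_set_cases[of S] show "S \<in> {S::bool set. S \<subseteq> UNIV \<and> S \<inter> {} = {}} \<longleftrightarrow> S \<in> {{}, {True}, {False}, UNIV}"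
    by auto
qed

definition RH :: "real \<Rightarrow> real \<Rightarrow> bool \<Rightarrow> bool set \<Rightarrow> real" where
  "RH t0 r w S = (1 - ln 2) + (if t0 < r then 2 * ln 2 * (if Not w \<in> S then 1 else 1 / 2) else 0)"

definition c1 :: "real \<Rightarrow> real \<Rightarrow> real" where "c1 t0 r = 1 - ln 2 + (if t0 < r then ln 2 else 0)"
definition c2 :: "real \<Rightarrow> real \<Rightarrow> real" where "c2 t0 r = 1 - ln 2 + (if t0 < r then 2 * ln 2 else 0)"

lemma RH_vals: "RH t0 r True {} = c1 t0 r" "RH t0 r False {} = c1 t0 r"
  "RH t0 r True {False} = c2 t0 r" "RH t0 r False {True} = c2 t0 r"
  by (auto simp: RH_def c1_def c2_def)

lemma H_kol:
  assumes "kolmogorov_sol UNIV {} (res_Q t0) pH"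
  shows "kolmogorov_sol (Pow UNIV) {} (res_Q t0) pH"
  using assms by simp

lemma res_Q_shape: "res_Q t0 r S S' = (\<Sum>w\<in>UNIV - S. if S' = insert w S then RH t0 r w S else 0)"
  unfolding res_Q_def RH_def ..

lemma H_integrals:
  assumes K: "kolmogorov_sol UNIV {} (res_Q t0) pH" and t: "t \<in> {0..1}"
  shows "((\<lambda>r. - (pH r {} * c1 t0 r + pH r {False} * c2 t0 r)) has_integral (pH t {} + pH t {False} - 1)) {0..t}"
    and "((\<lambda>r. - (pH r {} * c1 t0 r + pH r {True} * c2 t0 r)) has_integral (pH t {} + pH t {True} - 1)) {0..t}"
    and "((\<lambda>r. - (pH r {} * (2 * c1 t0 r))) has_integral (pH t {} - 1)) {0..t}"
    and "pH t {} + pH t {True} + pH t {False} + pH t UNIV = 1"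
proof -
  note KA = kol_avoid[OF H_kol[OF K] finite_class.finite_UNIV t res_Q_shape subset_UNIV]
  note d1 = bool_neqs bool_neqs[THEN not_sym]
  show "((\<lambda>r. - (pH r {} * c1 t0 r + pH r {False} * c2 t0 r)) has_integral (pH t {} + pH t {False} - 1)) {0..t}"
    using KA[of "{True}"] unfolding avoidT by (simp add: RH_vals d1)
  show "((\<lambda>r. - (pH r {} * c1 t0 r + pH r {True} * c2 t0 r)) has_integral (pH t {} + pH t {True} - 1)) {0..t}"
    using KA[of "{False}"] unfolding avoidF by (simp add: RH_vals d1)
  show "((\<lambda>r. - (pH r {} * (2 * c1 t0 r))) has_integral (pH t {} - 1)) {0..t}"
    using KA[of UNIV] unfolding avoidU by (simp add: RH_vals UNIV_bool)
  have "((\<lambda>r. 0) has_integral (pH t {} + pH t {True} + pH t {False} + pH t UNIV - 1)) {0..t}"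
    using KA[of "{}"] unfolding avoidE by (simp add: d1 algebra_simps)
  then have "pH t {} + pH t {True} + pH t {False} + pH t UNIV - 1 = 0"
    using has_integral_0 has_integral_unique by blast
  then show "pH t {} + pH t {True} + pH t {False} + pH t UNIV = 1" by simp
qed

lemma ln2_bounds: "0 < ln (2::real)" "ln (2::real) < 1"
  using ln_2_less_1 by auto

lemma withT: "{S::bool set. True \<in> S} = {{True}, UNIV}"
proof (rule set_eqI)
  fix S :: "bool set"
  from bool_set_cases[of S] show "S \<in> {S::bool set. True \<in> S} \<longleftrightarrow> S \<in> {{True}, UNIV}"
    by auto
qed

lemma H_facts:
  assumes K: "kolmogorov_sol UNIV {} (res_Q t0) pH" and t: "t \<in> {0..1}"
  shows "pH t {True} = pH t {False}"
    and "1 - res_g pH t = 2 * (pH t {} + pH t {False}) - pH t {}"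
    and "res_f pH t = 1 - (pH t {} + pH t {False})"
proof -
  define d where "d r = pH r {True} - pH r {False}" for r
  have cont: "continuous_on {0..1} (\<lambda>r. pH r S)" for S
    using K unfolding kolmogorov_sol_def by blast
  have dc: "continuous_on {0..1} d" unfolding d_def by (intro continuous_intros cont)
  have adc: "continuous_on {0..1} (\<lambda>r. \<bar>d r\<bar>)" by (intro continuous_intros dc)
  have c2b: "0 \<le> c2 t0 r" "c2 t0 r \<le> 2" for r using ln2_bounds unfolding c2_def by (split if_split; intro conjI impI; linarith)+
  have bound: "\<bar>d u\<bar> \<le> 2 * integral {0..u} (\<lambda>r. \<bar>d r\<bar>)" if u: "u \<in> {0..1}" for u
  proof -
    have "((\<lambda>r. - (pH r {} * c1 t0 r + pH r {False} * c2 t0 r) - - (pH r {} * c1 t0 r + pH r {True} * c2 t0 r))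
        has_integral ((pH u {} + pH u {False} - 1) - (pH u {} + pH u {True} - 1))) {0..u}"
      by (rule has_integral_diff[OF H_integrals(1)[OF K u] H_integrals(2)[OF K u]])
    then have hi: "((\<lambda>r. c2 t0 r * d r) has_integral (- d u)) {0..u}"
      unfolding d_def by (simp add: algebra_simps)
    have "\<bar>- d u\<bar> \<le> integral {0..u} (\<lambda>r. 2 * \<bar>d r\<bar>)"
    proof (rule int_abs_bound[OF hi])
      show "continuous_on {0..u} (\<lambda>r. 2 * \<bar>d r\<bar>)"
        by (intro continuous_intros continuous_on_subset[OF dc]) (use u in auto)
      fix r show "\<bar>c2 t0 r * d r\<bar> \<le> 2 * \<bar>d r\<bar>"
        using c2b[of r] by (simp add: abs_mult mult_right_mono)
    qed
    then show ?thesis by simp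
  qed
  have sym: "d s = 0" if s: "s \<in> {0..1}" for s
  proof -
    have "\<bar>d s\<bar> = 0"
      by (rule gronwall0[where e = "\<lambda>r. \<bar>d r\<bar>" and K = 2, OF adc _ _ bound s]) auto
    then show ?thesis by simp
  qed
  show s1: "pH t {True} = pH t {False}" using sym[OF t] unfolding d_def by simp
  have m: "pH t {} + pH t {True} + pH t {False} + pH t UNIV = 1" by (rule H_integrals(4)[OF K t])
  show "1 - res_g pH t = 2 * (pH t {} + pH t {False}) - pH t {}"
    using m s1 unfolding res_g_def by simp
  have "res_f pH t = pH t {True} + pH t UNIV"
    unfolding res_f_def withT using bool_neqs(4) by simp
  then show "res_f pH t = 1 - (pH t {} + pH t {False})" using m by simp
qed



lemma sum_abs_bound:
  fixes lam X :: "'a \<Rightarrow> real"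
  assumes "finite A" "\<And>i. i \<in> A \<Longrightarrow> 0 \<le> lam i" "\<And>i. i \<in> A \<Longrightarrow> \<bar>X i\<bar> \<le> B"
  shows "\<bar>\<Sum>i\<in>A. lam i * X i\<bar> \<le> (\<Sum>i\<in>A. lam i) * B"
proof -
  have "\<bar>\<Sum>i\<in>A. lam i * X i\<bar> \<le> (\<Sum>i\<in>A. \<bar>lam i * X i\<bar>)" by (rule sum_abs)
  also have "\<dots> \<le> (\<Sum>i\<in>A. lam i * B)"
    using assms by (intro sum_mono) (simp add: abs_mult mult_left_mono)
  also have "\<dots> = (\<Sum>i\<in>A. lam i) * B" by (simp add: sum_distrib_right)
  finally show ?thesis .
qed

lemma sum_upper_bound:
  fixes lam X :: "'a \<Rightarrow> real"
  assumes "finite A" "\<And>i. i \<in> A \<Longrightarrow> 0 \<le> lam i" "\<And>i. i \<in> A \<Longrightarrow> X i \<le> B"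
  shows "(\<Sum>i\<in>A. lam i * X i) \<le> (\<Sum>i\<in>A. lam i) * B"
proof -
  have "(\<Sum>i\<in>A. lam i * X i) \<le> (\<Sum>i\<in>A. lam i * B)"
    using assms by (intro sum_mono) (simp add: mult_left_mono)
  also have "\<dots> = (\<Sum>i\<in>A. lam i) * B" by (simp add: sum_distrib_right)
  finally show ?thesis .
qed

locale aux_setting =
  fixes I :: "'i set" and J :: "'j set" and N :: "'i \<Rightarrow> 'j set"
    and lam :: "'i \<Rightarrow> real" and x :: "'i \<Rightarrow> 'j \<Rightarrow> real" and FC :: "('i \<times> 'j) set"
    and t0 :: real and pH :: "real \<Rightarrow> bool set \<Rightarrow> real" and p :: "real \<Rightarrow> 'j set \<Rightarrow> real"
  assumes st: "standing_instance I J N lam x"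
    and vl: "valid_labeling I J N x FC"
    and KH: "kolmogorov_sol UNIV {} (res_Q t0) pH"
    and Kp: "kolmogorov_sol (Pow J) {} (aux_Q t0 I J N lam FC pH p) p"
begin

definition Ra :: "real \<Rightarrow> 'j \<Rightarrow> 'j set \<Rightarrow> real" where
  "Ra r w S = (\<Sum>i\<in>{i\<in>I. w \<in> N i}. lam i * aux_prob t0 J N FC pH p i w r S)"

definition Fu :: "'j \<Rightarrow> real \<Rightarrow> real" where
  "Fu u r = (\<Sum>S\<in>{S. S \<subseteq> J \<and> u \<notin> S}. p r S)"

lemma finJ: "finite J" using st unfolding standing_instance_def by blast
lemma finI: "finite I" using st unfolding standing_instance_def by blast

lemma lam_nn: "i \<in> I \<Longrightarrow> 0 \<le> lam i" using st unfolding standing_instance_def by force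

lemma Q_shape: "aux_Q t0 I J N lam FC pH p r S S' = (\<Sum>w\<in>J-S. if S' = insert w S then Ra r w S else 0)"
  unfolding aux_Q_def Ra_def ..

lemma p_nn: "r \<in> {0..1} \<Longrightarrow> S \<subseteq> J \<Longrightarrow> 0 \<le> p r S"
  using Kp unfolding kolmogorov_sol_def by blast

lemma p_cont: "S \<subseteq> J \<Longrightarrow> continuous_on {0..1} (\<lambda>r. p r S)"
  using Kp unfolding kolmogorov_sol_def by blast

lemma pH_nn: "r \<in> {0..1} \<Longrightarrow> 0 \<le> pH r S"
  using KH unfolding kolmogorov_sol_def by blast

lemma pH_cont: "continuous_on {0..1} (\<lambda>r. pH r S)"
  using KH unfolding kolmogorov_sol_def by blast

lemma finX: "finite {S. S \<subseteq> J \<and> Q S}"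
  by (rule finite_subset[of _ "Pow J"]) (use finJ in auto)

lemma sub_le:
  assumes r: "r \<in> {0..1}" and "\<And>S. S \<subseteq> J \<Longrightarrow> P S \<Longrightarrow> Q S"
  shows "(\<Sum>S\<in>{S. S \<subseteq> J \<and> P S}. p r S) \<le> (\<Sum>S\<in>{S. S \<subseteq> J \<and> Q S}. p r S)"
  by (rule sum_mono2[OF finX]) (use assms p_nn in auto)

lemma sub_nn:
  assumes r: "r \<in> {0..1}"
  shows "0 \<le> (\<Sum>S\<in>{S. S \<subseteq> J \<and> P S}. p r S)"
  by (rule sum_nonneg) (use r p_nn in auto)

lemma mass: "t \<in> {0..1} \<Longrightarrow> (\<Sum>S\<in>{S. S \<subseteq> J}. p t S) = 1"
proof -
  assume t: "t \<in> {0..1}"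
  have "((\<lambda>r. 0) has_integral ((\<Sum>S\<in>{S. S \<subseteq> J \<and> S \<inter> {} = {}}. p t S) - 1)) {0..t}"
    using kol_avoid[OF Kp finJ t Q_shape, of "{}"] by simp
  then have "(\<Sum>S\<in>{S. S \<subseteq> J \<and> S \<inter> {} = {}}. p t S) - 1 = 0"
    using has_integral_0 has_integral_unique by blast
  then show ?thesis by simp
qed

lemma aux_f_Fu: "t \<in> {0..1} \<Longrightarrow> aux_f J p u t = 1 - Fu u t"
proof -
  assume t: "t \<in> {0..1}"
  have "(\<Sum>S\<in>{S. S \<subseteq> J}. p t S) = (\<Sum>S\<in>{S\<in>{S. S \<subseteq> J}. u \<in> S}. p t S) + (\<Sum>S\<in>{S\<in>{S. S \<subseteq> J}. u \<notin> S}. p t S)"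
    by (rule sum_split) (use finJ in simp)
  also have "{S\<in>{S. S \<subseteq> J}. u \<in> S} = {S. S \<subseteq> J \<and> u \<in> S}" by auto
  also have "{S\<in>{S. S \<subseteq> J}. u \<notin> S} = {S. S \<subseteq> J \<and> u \<notin> S}" by auto
  finally show ?thesis using mass[OF t] unfolding aux_f_def Fu_def by simp
qed

lemma Fu_int: "t \<in> {0..1} \<Longrightarrow> u \<in> J \<Longrightarrow>
   ((\<lambda>r. - (\<Sum>S\<in>{S. S \<subseteq> J \<and> u \<notin> S}. p r S * Ra r u S)) has_integral (Fu u t - 1)) {0..t}"
proof -
  assume t: "t \<in> {0..1}" and u: "u \<in> J"
  have e: "{S. S \<subseteq> J \<and> S \<inter> {u} = {}} = {S. S \<subseteq> J \<and> u \<notin> S}" by auto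
  show ?thesis using kol_avoid[OF Kp finJ t Q_shape, of "{u}"] u unfolding e Fu_def by simp
qed

lemma G_int: "t \<in> {0..1} \<Longrightarrow> u \<in> J \<Longrightarrow> v \<in> J \<Longrightarrow> u \<noteq> v \<Longrightarrow>
   ((\<lambda>r. - (\<Sum>S\<in>{S. S \<subseteq> J \<and> u \<notin> S \<and> v \<notin> S}. p r S * (Ra r u S + Ra r v S))) has_integral (aux_g' J p u v t - 1)) {0..t}"
proof -
  assume t: "t \<in> {0..1}" and u: "u \<in> J" and v: "v \<in> J" and uv: "u \<noteq> v"
  have e: "{S. S \<subseteq> J \<and> S \<inter> {u, v} = {}} = {S. S \<subseteq> J \<and> u \<notin> S \<and> v \<notin> S}" by auto
  show ?thesis using kol_avoid[OF Kp finJ t Q_shape, of "{u, v}"] u v uv unfolding e aux_g'_def by simp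
qed

definition FH :: "real \<Rightarrow> real" where "FH r = pH r {} + pH r {False}"
definition GH :: "real \<Rightarrow> real" where "GH r = pH r {}"
definition dl :: "'j \<Rightarrow> real \<Rightarrow> real" where "dl u r = \<bar>Fu u r - FH r\<bar>"
definition et :: "'j \<Rightarrow> 'j \<Rightarrow> real \<Rightarrow> real" where "et u v r = max (aux_g' J p u v r - GH r) 0"
definition ee :: "real \<Rightarrow> real" where
  "ee r = (\<Sum>u\<in>J. dl u r) + (\<Sum>u\<in>J. \<Sum>v\<in>J-{u}. et u v r)"

lemma E1_nn: "0 \<le> (\<Sum>u\<in>J. dl u r)" by (rule sum_nonneg) (simp add: dl_def)
lemma E2_nn: "0 \<le> (\<Sum>u\<in>J. \<Sum>v\<in>J-{u}. et u v r)" by (intro sum_nonneg) (simp add: et_def)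
lemma ee_nn: "0 \<le> ee r" unfolding ee_def using E1_nn E2_nn by simp

lemma dl_le: "u \<in> J \<Longrightarrow> dl u r \<le> (\<Sum>u\<in>J. dl u r)"
  by (rule member_le_sum) (auto simp: dl_def finJ)

lemma et_le: "u \<in> J \<Longrightarrow> w \<in> J \<Longrightarrow> w \<noteq> u \<Longrightarrow> et u w r \<le> (\<Sum>u\<in>J. \<Sum>v\<in>J-{u}. et u v r)"
proof -
  assume u: "u \<in> J" and w: "w \<in> J" "w \<noteq> u"
  have "et u w r \<le> (\<Sum>v\<in>J-{u}. et u v r)"
    by (rule member_le_sum) (use w finJ in \<open>auto simp: et_def\<close>)
  also have "\<dots> \<le> (\<Sum>u\<in>J. \<Sum>v\<in>J-{u}. et u v r)"
    by (rule member_le_sum[where f = "\<lambda>u. \<Sum>v\<in>J-{u}. et u v r"]) (use u finJ in \<open>auto simp: et_def intro: sum_nonneg\<close>)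
  finally show ?thesis .
qed

lemma dl_et_le: "u \<in> J \<Longrightarrow> w \<in> J \<Longrightarrow> w \<noteq> u \<Longrightarrow> dl u r + et u w r \<le> ee r"
  using dl_le et_le unfolding ee_def by (meson add_mono)

lemma dl_ee: "u \<in> J \<Longrightarrow> dl u r \<le> ee r"
proof -
  assume u: "u \<in> J"
  show ?thesis using dl_le[OF u, of r] E2_nn[of r] unfolding ee_def by linarith
qed

lemma GH_FH: "r \<in> {0..1} \<Longrightarrow> 0 \<le> GH r \<and> GH r \<le> FH r"
  using pH_nn[of r "{}"] pH_nn[of r "{False}"] unfolding GH_def FH_def by simp

lemma gb_eq: "r \<in> {0..1} \<Longrightarrow> 1 - res_g pH r = 2 * FH r - GH r"
  using H_facts(2)[OF KH] unfolding FH_def GH_def by simp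

lemma mm_eq: "r \<in> {0..1} \<Longrightarrow> mm J N pH p i u r = min ((2 * FH r - GH r) / (2 * Fu u r - aux_g' J p u (oth N i u) r)) 1"
  unfolding mm_def using gb_eq aux_f_Fu by simp

lemma PB1:
  assumes r: "r \<in> {0..1}" and u: "u \<in> J"
  shows "\<bar>- (\<Sum>S\<in>{S. S \<subseteq> J \<and> u \<notin> S}. p r S * Ra r u S) - - (pH r {} * c1 t0 r + pH r {False} * c2 t0 r)\<bar> \<le> 2 * ee r"
proof -
  define L where "L = ln (2::real)"
  have L: "0 < L" "L < 1" using ln2_bounds unfolding L_def by auto
  define F where "F = FH r"
  define G where "G = GH r"
  define U where "U = Fu u r"
  define g where "g i = aux_g' J p u (oth N i u) r" for i
  define m where "m i = mm J N pH p i u r" for i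
  have pF: "pH r {False} = F - G" unfolding F_def G_def FH_def GH_def by simp
  have pE: "pH r {} = G" unfolding G_def GH_def ..
  have W: "(\<Sum>S\<in>{S. S \<subseteq> J \<and> u \<notin> S}. p r S * Ra r u S) = (1 - L) * U +
      (if t0 < r then (\<Sum>i\<in>SC I N FC u. lam i * m i * (U - g i / 2)) else 0)"
    unfolding Ra_def U_def m_def g_def aux_g'_def L_def Fu_def
    using weighted[OF st vl u, where Q = "\<lambda>S. u \<notin> S"] by simp
  have lsum: "(\<Sum>i\<in>SC I N FC u. lam i) = 2 * L" using rate_parts(2)[OF st vl u] unfolding L_def .
  have finSC: "finite (SC I N FC u)" using finI unfolding SC_def by simp
  have lamSC: "i \<in> SC I N FC u \<Longrightarrow> 0 \<le> lam i" for i using lam_nn unfolding SC_def by blast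
  have dlU: "\<bar>U - F\<bar> \<le> ee r" using dl_ee[OF u, of r] unfolding dl_def U_def F_def .
  have GF: "0 \<le> G" "G \<le> F" using GH_FH[OF r] unfolding G_def F_def by auto
  show ?thesis
  proof (cases "t0 < r")
    case False
    then have "- (\<Sum>S\<in>{S. S \<subseteq> J \<and> u \<notin> S}. p r S * Ra r u S) - - (pH r {} * c1 t0 r + pH r {False} * c2 t0 r)
        = - (1 - L) * (U - F)"
      unfolding W pF pE c1_def c2_def L_def by (simp add: algebra_simps)
    also have "\<bar>\<dots>\<bar> \<le> (1 - L) * ee r" using L dlU by (simp add: abs_mult mult_left_mono)
    also have "\<dots> \<le> 2 * ee r" using L ee_nn[of r] by (simp add: mult_right_mono)
    finally show ?thesis .
  next
    case True
    define X where "X i = (2 * F - G) / 2 - m i * ((2 * U - g i) / 2)" for i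
    have "- (\<Sum>S\<in>{S. S \<subseteq> J \<and> u \<notin> S}. p r S * Ra r u S) - - (pH r {} * c1 t0 r + pH r {False} * c2 t0 r)
        = - (1 - L) * (U - F) + ((\<Sum>i\<in>SC I N FC u. lam i) * ((2 * F - G) / 2) - (\<Sum>i\<in>SC I N FC u. lam i * m i * (U - g i / 2)))"
      unfolding W pF pE c1_def c2_def lsum using True unfolding L_def by (simp add: algebra_simps add_divide_distrib diff_divide_distrib)
    also have "(\<Sum>i\<in>SC I N FC u. lam i) * ((2 * F - G) / 2) - (\<Sum>i\<in>SC I N FC u. lam i * m i * (U - g i / 2))
        = (\<Sum>i\<in>SC I N FC u. lam i * X i)"
    proof -
      have "lam i * X i = lam i * ((2 * F - G) / 2) - lam i * m i * (U - g i / 2)" for i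
        unfolding X_def by (simp add: field_simps)
      then have "(\<Sum>i\<in>SC I N FC u. lam i * X i) = (\<Sum>i\<in>SC I N FC u. lam i * ((2 * F - G) / 2)) - (\<Sum>i\<in>SC I N FC u. lam i * m i * (U - g i / 2))"
        by (simp add: sum_subtractf)
      then show ?thesis by (simp add: sum_distrib_right)
    qed
    finally have eq: "- (\<Sum>S\<in>{S. S \<subseteq> J \<and> u \<notin> S}. p r S * Ra r u S) - - (pH r {} * c1 t0 r + pH r {False} * c2 t0 r)
        = - (1 - L) * (U - F) + (\<Sum>i\<in>SC I N FC u. lam i * X i)" .
    have Xb: "\<bar>X i\<bar> \<le> ee r" if i: "i \<in> SC I N FC u" for i
    proof -
      have iI: "i \<in> I" "u \<in> N i" "card (N i) \<noteq> 1" using i unfolding SC_def by auto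
      have w: "oth N i u \<in> J" "oth N i u \<noteq> u" using inst2[OF st iI] by auto
      have gU: "g i \<le> U" unfolding g_def U_def aux_g'_def Fu_def by (rule sub_le[OF r]) auto
      have U0: "0 \<le> U" unfolding U_def Fu_def by (rule sub_nn[OF r])
      have mi: "m i = min ((2 * F - G) / (2 * U - g i)) 1"
        unfolding m_def F_def G_def U_def g_def by (rule mm_eq[OF r])
      have "\<bar>X i\<bar> \<le> max ((2 * F - G) - (2 * U - g i)) 0 / 2"
        unfolding X_def mi by (rule sc1) (use GF gU U0 in auto)
      also have "\<dots> \<le> dl u r + et u (oth N i u) r"
        unfolding dl_def et_def U_def[symmetric] F_def[symmetric] G_def[symmetric] g_def[symmetric]
        by (simp add: max_def abs_if) 
      also have "\<dots> \<le> ee r" by (rule dl_et_le[OF u w])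
      finally show ?thesis .
    qed
    have "\<bar>- (1 - L) * (U - F) + (\<Sum>i\<in>SC I N FC u. lam i * X i)\<bar> \<le> (1 - L) * ee r + 2 * L * ee r"
    proof -
      have "\<bar>- (1 - L) * (U - F)\<bar> \<le> (1 - L) * ee r" using L dlU by (simp add: abs_mult mult_left_mono)
      moreover have "\<bar>\<Sum>i\<in>SC I N FC u. lam i * X i\<bar> \<le> 2 * L * ee r"
        using sum_abs_bound[where A = "SC I N FC u" and lam = lam and X = X and B = "ee r"] finSC lamSC Xb lsum by simp
      ultimately show ?thesis by linarith
    qed
    also have "\<dots> \<le> 2 * ee r"
    proof -
      have "L * ee r \<le> 1 * ee r" using L ee_nn[of r] by (intro mult_right_mono) auto
      then show ?thesis by (simp add: algebra_simps)
    qed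
    finally show ?thesis unfolding eq .
  qed
qed

lemma side_bound:
  assumes r: "r \<in> {0..1}" and a: "a \<in> J" and i: "i \<in> SC I N FC a"
    and Gg: "GH r \<le> g" and gdef: "g = (\<Sum>S\<in>{S. S \<subseteq> J \<and> P S}. p r S)" and Pa: "\<And>S. P S \<Longrightarrow> a \<notin> S"
  shows "GH r / 2 - mm J N pH p i a r * (g - (\<Sum>S\<in>{S. S \<subseteq> J \<and> P S \<and> oth N i a \<notin> S}. p r S) / 2) \<le> 2 * ee r"
proof -
  let ?w = "oth N i a"
  have iI: "i \<in> I" "a \<in> N i" "card (N i) \<noteq> 1" using i unfolding SC_def by auto
  have w: "?w \<in> J" "?w \<noteq> a" using inst2[OF st iI] by auto
  let ?T = "(\<Sum>S\<in>{S. S \<subseteq> J \<and> P S \<and> ?w \<notin> S}. p r S)"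
  let ?g2 = "aux_g' J p a ?w r"
  have "GH r / 2 - min ((2 * FH r - GH r) / (2 * Fu a r - ?g2)) 1 * (g - ?T / 2) \<le> 2 * (dl a r + et a ?w r)"
  proof (rule sc2)
    show "0 \<le> ?T" by (rule sub_nn[OF r])
    show "?T \<le> g" unfolding gdef by (rule sub_le[OF r]) auto
    show "?T \<le> ?g2" unfolding aux_g'_def by (rule sub_le[OF r]) (use Pa in auto)
    show "GH r \<le> g" by (rule Gg)
    show "0 \<le> GH r" "GH r \<le> FH r" using GH_FH[OF r] by auto
    show "?g2 \<le> Fu a r" unfolding aux_g'_def Fu_def by (rule sub_le[OF r]) auto
    show "g \<le> Fu a r" unfolding gdef Fu_def by (rule sub_le[OF r]) (use Pa in auto)
    show "\<bar>Fu a r - FH r\<bar> \<le> dl a r" unfolding dl_def ..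
    show "?g2 - GH r \<le> et a ?w r" "0 \<le> et a ?w r" unfolding et_def by auto
  qed
  also have "\<dots> \<le> 2 * ee r" using dl_et_le[OF a w, of r] by simp
  finally show ?thesis using mm_eq[OF r, of i a] by simp
qed

lemma PB2:
  assumes r: "r \<in> {0..1}" and u: "u \<in> J" and v: "v \<in> J" and uv: "u \<noteq> v"
    and Gg: "GH r \<le> aux_g' J p u v r"
  shows "- (\<Sum>S\<in>{S. S \<subseteq> J \<and> u \<notin> S \<and> v \<notin> S}. p r S * (Ra r u S + Ra r v S)) - - (pH r {} * (2 * c1 t0 r)) \<le> 8 * ee r"
proof -
  define L where "L = ln (2::real)"
  have L: "0 < L" "L < 1" using ln2_bounds unfolding L_def by auto
  define g where "g = aux_g' J p u v r"
  define G where "G = GH r"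
  define Xu where "Xu i = G / 2 - mm J N pH p i u r * (g - (\<Sum>S\<in>{S. S \<subseteq> J \<and> (u \<notin> S \<and> v \<notin> S) \<and> oth N i u \<notin> S}. p r S) / 2)" for i
  define Xv where "Xv i = G / 2 - mm J N pH p i v r * (g - (\<Sum>S\<in>{S. S \<subseteq> J \<and> (u \<notin> S \<and> v \<notin> S) \<and> oth N i v \<notin> S}. p r S) / 2)" for i
  have gdef: "g = (\<Sum>S\<in>{S. S \<subseteq> J \<and> (u \<notin> S \<and> v \<notin> S)}. p r S)" unfolding g_def aux_g'_def by simp
  have Wu: "(\<Sum>S\<in>{S. S \<subseteq> J \<and> (u \<notin> S \<and> v \<notin> S)}. p r S * Ra r u S) = (1 - L) * g +
      (if t0 < r then (\<Sum>i\<in>SC I N FC u. lam i * mm J N pH p i u r * (g - (\<Sum>S\<in>{S. S \<subseteq> J \<and> (u \<notin> S \<and> v \<notin> S) \<and> oth N i u \<notin> S}. p r S) / 2)) else 0)"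
    unfolding Ra_def gdef L_def
    by (rule weighted[OF st vl u, where Q = "\<lambda>S. u \<notin> S \<and> v \<notin> S"])
  have Wv: "(\<Sum>S\<in>{S. S \<subseteq> J \<and> (u \<notin> S \<and> v \<notin> S)}. p r S * Ra r v S) = (1 - L) * g +
      (if t0 < r then (\<Sum>i\<in>SC I N FC v. lam i * mm J N pH p i v r * (g - (\<Sum>S\<in>{S. S \<subseteq> J \<and> (u \<notin> S \<and> v \<notin> S) \<and> oth N i v \<notin> S}. p r S) / 2)) else 0)"
    unfolding Ra_def gdef L_def
    by (rule weighted[OF st vl v, where Q = "\<lambda>S. u \<notin> S \<and> v \<notin> S"])
  have split: "(\<Sum>S\<in>{S. S \<subseteq> J \<and> u \<notin> S \<and> v \<notin> S}. p r S * (Ra r u S + Ra r v S))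
     = (\<Sum>S\<in>{S. S \<subseteq> J \<and> (u \<notin> S \<and> v \<notin> S)}. p r S * Ra r u S) + (\<Sum>S\<in>{S. S \<subseteq> J \<and> (u \<notin> S \<and> v \<notin> S)}. p r S * Ra r v S)"
    by (simp add: distrib_left sum.distrib)
  have lu: "(\<Sum>i\<in>SC I N FC u. lam i) = 2 * L" using rate_parts(2)[OF st vl u] unfolding L_def .
  have lv: "(\<Sum>i\<in>SC I N FC v. lam i) = 2 * L" using rate_parts(2)[OF st vl v] unfolding L_def .
  have finSC: "finite (SC I N FC a)" for a using finI unfolding SC_def by simp
  have lamSC: "i \<in> SC I N FC a \<Longrightarrow> 0 \<le> lam i" for i a using lam_nn unfolding SC_def by blast
  have Gg': "G \<le> g" using Gg unfolding G_def g_def .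
  have pE: "pH r {} = G" unfolding G_def GH_def ..
  have ee0: "0 \<le> ee r" by (rule ee_nn)
  show ?thesis
  proof (cases "t0 < r")
    case False
    have "- (\<Sum>S\<in>{S. S \<subseteq> J \<and> u \<notin> S \<and> v \<notin> S}. p r S * (Ra r u S + Ra r v S)) - - (pH r {} * (2 * c1 t0 r))
        = 2 * (1 - L) * (G - g)"
      unfolding split Wu Wv pE c1_def using False unfolding L_def by (simp add: algebra_simps)
    also have "\<dots> \<le> 0" using L Gg' by (simp add: mult_nonneg_nonpos)
    also have "\<dots> \<le> 8 * ee r" using ee0 by simp
    finally show ?thesis .
  next
    case True
    have su: "(\<Sum>i\<in>SC I N FC u. lam i * Xu i) = (\<Sum>i\<in>SC I N FC u. lam i) * (G / 2)
        - (\<Sum>i\<in>SC I N FC u. lam i * mm J N pH p i u r * (g - (\<Sum>S\<in>{S. S \<subseteq> J \<and> (u \<notin> S \<and> v \<notin> S) \<and> oth N i u \<notin> S}. p r S) / 2))"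
      unfolding Xu_def by (simp add: sum_distrib_right sum_subtractf right_diff_distrib mult.assoc)
    have sv: "(\<Sum>i\<in>SC I N FC v. lam i * Xv i) = (\<Sum>i\<in>SC I N FC v. lam i) * (G / 2)
        - (\<Sum>i\<in>SC I N FC v. lam i * mm J N pH p i v r * (g - (\<Sum>S\<in>{S. S \<subseteq> J \<and> (u \<notin> S \<and> v \<notin> S) \<and> oth N i v \<notin> S}. p r S) / 2))"
      unfolding Xv_def by (simp add: sum_distrib_right sum_subtractf right_diff_distrib mult.assoc)
    have "- (\<Sum>S\<in>{S. S \<subseteq> J \<and> u \<notin> S \<and> v \<notin> S}. p r S * (Ra r u S + Ra r v S)) - - (pH r {} * (2 * c1 t0 r))
        = 2 * (1 - L) * (G - g) + (\<Sum>i\<in>SC I N FC u. lam i * Xu i) + (\<Sum>i\<in>SC I N FC v. lam i * Xv i)"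
      unfolding split Wu Wv pE c1_def su sv lu lv using True unfolding L_def by (simp add: algebra_simps)
    also have "\<dots> \<le> 0 + 2 * L * (2 * ee r) + 2 * L * (2 * ee r)"
    proof (intro add_mono)
      show "2 * (1 - L) * (G - g) \<le> 0" using L Gg' by (simp add: mult_nonneg_nonpos)
      have "(\<Sum>i\<in>SC I N FC u. lam i * Xu i) \<le> (\<Sum>i\<in>SC I N FC u. lam i) * (2 * ee r)"
      proof (rule sum_upper_bound[OF finSC lamSC])
        fix i assume i: "i \<in> SC I N FC u"
        show "Xu i \<le> 2 * ee r" unfolding Xu_def G_def
          by (rule side_bound[OF r u i Gg[folded g_def] gdef]) auto
      qed
      then show "(\<Sum>i\<in>SC I N FC u. lam i * Xu i) \<le> 2 * L * (2 * ee r)" using lu by simp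
      have "(\<Sum>i\<in>SC I N FC v. lam i * Xv i) \<le> (\<Sum>i\<in>SC I N FC v. lam i) * (2 * ee r)"
      proof (rule sum_upper_bound[OF finSC lamSC])
        fix i assume i: "i \<in> SC I N FC v"
        show "Xv i \<le> 2 * ee r" unfolding Xv_def G_def
          by (rule side_bound[OF r v i Gg[folded g_def] gdef]) auto
      qed
      then show "(\<Sum>i\<in>SC I N FC v. lam i * Xv i) \<le> 2 * L * (2 * ee r)" using lv by simp
    qed
    also have "\<dots> = 8 * L * ee r" by simp
    also have "\<dots> \<le> 8 * ee r" using L ee0 by (simp add: mult_right_mono)
    finally show ?thesis .
  qed
qed

lemma sum_p_cont: "continuous_on {0..1} (\<lambda>r. \<Sum>S\<in>{S. S \<subseteq> J \<and> P S}. p r S)"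
  by (rule continuous_on_sum) (auto intro: p_cont)

lemma Fu_cont: "continuous_on {0..1} (Fu u)"
  unfolding Fu_def by (rule sum_p_cont)

lemma g_cont: "continuous_on {0..1} (aux_g' J p u v)"
  unfolding aux_g'_def by (rule sum_p_cont)

lemma FH_cont: "continuous_on {0..1} FH"
  unfolding FH_def by (intro continuous_intros pH_cont)

lemma GH_cont: "continuous_on {0..1} GH"
  unfolding GH_def by (rule pH_cont)

lemma ee_cont: "continuous_on {0..1} ee"
  unfolding ee_def dl_def et_def
  by (intro continuous_intros continuous_on_sum Fu_cont FH_cont g_cont GH_cont)

lemma ee_bound:
  assumes t: "t \<in> {0..1}"
  shows "ee t \<le> (2 * real (card J) + 8 * real (card J) * real (card J)) * integral {0..t} ee"
proof -
  define I where "I = integral {0..t} ee"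
  have sub: "{0..t} \<subseteq> {0..1}" using t by auto
  have ect: "continuous_on {0..t} ee" by (rule continuous_on_subset[OF ee_cont sub])
  have eint: "ee integrable_on {0..t}" by (rule integrable_continuous_interval[OF ect])
  have I0: "0 \<le> I" unfolding I_def
    by (rule Henstock_Kurzweil_Integration.integral_nonneg[OF eint]) (rule ee_nn)
  have D1: "dl u t \<le> 2 * I" if u: "u \<in> J" for u
  proof -
    have hi: "((\<lambda>r. - (\<Sum>S\<in>{S. S \<subseteq> J \<and> u \<notin> S}. p r S * Ra r u S) - - (pH r {} * c1 t0 r + pH r {False} * c2 t0 r))
       has_integral ((Fu u t - 1) - (pH t {} + pH t {False} - 1))) {0..t}"
      by (rule has_integral_diff[OF Fu_int[OF t u] H_integrals(1)[OF KH t]])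
    have "\<bar>(Fu u t - 1) - (pH t {} + pH t {False} - 1)\<bar> \<le> integral {0..t} (\<lambda>r. 2 * ee r)"
    proof (rule int_abs_bound[OF hi])
      show "continuous_on {0..t} (\<lambda>r. 2 * ee r)" by (intro continuous_intros ect)
      fix r assume "r \<in> {0..t}"
      then have "r \<in> {0..1}" using sub by auto
      then show "\<bar>- (\<Sum>S\<in>{S. S \<subseteq> J \<and> u \<notin> S}. p r S * Ra r u S) - - (pH r {} * c1 t0 r + pH r {False} * c2 t0 r)\<bar> \<le> 2 * ee r"
        by (rule PB1[OF _ u])
    qed
    then show ?thesis unfolding dl_def FH_def I_def by simp
  qed
  have D2: "et u v t \<le> 8 * I" if u: "u \<in> J" and v: "v \<in> J - {u}" for u v
  proof -
    have vJ: "v \<in> J" and uv: "u \<noteq> v" using v by auto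
    let ?h = "\<lambda>s. aux_g' J p u v s - GH s"
    let ?\<beta> = "\<lambda>r. - (\<Sum>S\<in>{S. S \<subseteq> J \<and> u \<notin> S \<and> v \<notin> S}. p r S * (Ra r u S + Ra r v S)) - - (pH r {} * (2 * c1 t0 r))"
    have "?h t \<le> integral {0..t} (\<lambda>r. 8 * ee r)"
    proof (rule barrier)
      show "0 \<le> t" using t by simp
      show "continuous_on {0..t} ?h"
        by (rule continuous_on_subset[OF _ sub]) (intro continuous_intros g_cont GH_cont)
      fix s assume s: "s \<in> {0..t}"
      then have s1: "s \<in> {0..1}" using sub by auto
      have "(?\<beta> has_integral ((aux_g' J p u v s - 1) - (pH s {} - 1))) {0..s}"
        by (rule has_integral_diff[OF G_int[OF s1 u vJ uv] H_integrals(3)[OF KH s1]])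
      then show "(?\<beta> has_integral ?h s) {0..s}" unfolding GH_def by simp
    next
      fix r assume r: "r \<in> {0..t}" and hr: "0 \<le> ?h r"
      then have r1: "r \<in> {0..1}" using sub by auto
      show "?\<beta> r \<le> 8 * ee r" by (rule PB2[OF r1 u vJ uv]) (use hr in simp)
    next
      show "continuous_on {0..t} (\<lambda>r. 8 * ee r)" by (intro continuous_intros ect)
      fix r show "0 \<le> 8 * ee r" using ee_nn[of r] by simp
    qed
    then have "?h t \<le> 8 * I" unfolding I_def by simp
    then show ?thesis unfolding et_def using I0 by simp
  qed
  have "(\<Sum>u\<in>J. dl u t) \<le> real (card J) * (2 * I)"
    by (rule sum_bounded_above) (rule D1)
  moreover have "(\<Sum>u\<in>J. \<Sum>v\<in>J-{u}. et u v t) \<le> real (card J) * (real (card J) * (8 * I))"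
  proof (rule sum_bounded_above)
    fix u assume u: "u \<in> J"
    have "(\<Sum>v\<in>J-{u}. et u v t) \<le> real (card (J - {u})) * (8 * I)"
      by (rule sum_bounded_above) (rule D2[OF u])
    also have "\<dots> \<le> real (card J) * (8 * I)"
      using I0 finJ by (intro mult_right_mono) (auto simp: card_mono)
    finally show "(\<Sum>v\<in>J-{u}. et u v t) \<le> real (card J) * (8 * I)" .
  qed
  ultimately have "ee t \<le> real (card J) * (2 * I) + real (card J) * (real (card J) * (8 * I))"
    unfolding ee_def by linarith
  also have "\<dots> = (2 * real (card J) + 8 * real (card J) * real (card J)) * I"
    by (simp add: algebra_simps)
  finally show ?thesis unfolding I_def .
qed

lemma ee_zero: "t \<in> {0..1} \<Longrightarrow> ee t = 0"
  by (rule gronwall0[OF ee_cont ee_nn _ ee_bound]) auto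

lemma main: "u \<in> J \<Longrightarrow> t \<in> {0..1} \<Longrightarrow> aux_f J p u t = res_f pH t"
proof -
  assume u: "u \<in> J" and t: "t \<in> {0..1}"
  have "dl u t \<le> 0" using dl_ee[OF u, of t] ee_zero[OF t] by simp
  then have "Fu u t = FH t" unfolding dl_def by simp
  then show ?thesis using aux_f_Fu[OF t] H_facts(3)[OF KH t] unfolding FH_def by simp
qed

end


theorem corollary4p7:
  fixes I :: "'i set" and J :: "'j set" and N :: "'i \<Rightarrow> 'j set"
    and lam :: "'i \<Rightarrow> real" and x :: "'i \<Rightarrow> 'j \<Rightarrow> real" and FC :: "('i \<times> 'j) set"
    and t0 :: real and pH :: "real \<Rightarrow> bool set \<Rightarrow> real" and p :: "real \<Rightarrow> 'j set \<Rightarrow> real"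
  assumes "standing_instance I J N lam x"
    and "valid_labeling I J N x FC"
    and "kolmogorov_sol UNIV {} (res_Q t0) pH"
    and "kolmogorov_sol (Pow J) {} (aux_Q t0 I J N lam FC pH p) p"
  shows "\<forall>u\<in>J. \<forall>t\<in>{0..1}. aux_f J p u t = res_f pH t"
  proof -
  interpret aux_setting I J N lam x FC t0 pH p using assms by unfold_locales
  show ?thesis using main by blast
qed

end
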